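(* Let $K,L,T,r$ be positive integers with $L\le K$ and $1\le r\le\min\{K,T\}$, and let $(\alpha,\beta)$ be the $\mathsf{GASP}_r$ vectors. For $1\le i\le T$ let $P_i=\{\alpha_k+\beta_c: 1\le k\le K+i-1,\ 1\le c\le L+T\}$, $L_i=((\alpha_{\mathrm s})_i+\operatorname{Set}(\beta_{\mathrm p}))\cap P_i$ and $R_i=((\alpha_{\mathrm s})_i+\operatorname{Set}(\beta_{\mathrm s}))\cap P_i$. Then $|L_i|=\min\{L,2+\lfloor (T-1-i)/K\rfloor\}$ if $1\le i\le r$, and $|L_i|=L$ if $r+1\le i\le T$; and $|R_i|=\max\{0,K+T-KL-1\}$ if $i=1$, $|R_i|=\max\{0,T-K+r-1\}$ if $i\ge2$ and $i\equiv1\pmod r$, and $|R_i|=T-1$ if $i\not\equiv1\pmod r$.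
   Context: The code $\mathsf{GASP}_r$ ($L\le K$, $1\le r\le\min\{K,T\}$) consists of the vectors $\alpha=(\alpha_{\mathrm p}\mid\alpha_{\mathrm s})$ (entries $\alpha_1,\ldots,\alpha_{K+T}$) and $\beta=(\beta_{\mathrm p}\mid\beta_{\mathrm s})$ (entries $\beta_1,\ldots,\beta_{L+T}$) with $\alpha_{\mathrm p}=(0,1,\ldots,K-1)$; $\alpha_{\mathrm s}$ the $T$ smallest elements of $\{KL+j+Kt: 0\le j\le r-1,\ t\in\mathbb{Z}_{\ge0}\}$ in increasing order (so $(\alpha_{\mathrm s})_i=\alpha_{K+i}$); $\beta_{\mathrm p}=(0,K,\ldots,K(L-1))$; $\beta_{\mathrm s}=(KL,\ldots,KL+T-1)$. $\operatorname{Set}(v)$ is the set of entries of $v$ and $x+B=\{x+b:b\in B\}$. (Thus $L_i$, $R_i$ are the integers in the first $L$, resp. last $T$, entries of row $K+i$ of the table $(\alpha_k+\beta_c)_{k,c}$ that already appear in its first $K+i-1$ rows.) *)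

theory Defs
  imports Main "HOL-Library.Infinite_Set"
begin

text \<open>The set from which the secret part of alpha is drawn:
  {KL + j + K t : 0 \<le> j \<le> r-1, t \<ge> 0}.\<close>
definition gasp_S :: "nat \<Rightarrow> nat \<Rightarrow> nat \<Rightarrow> nat set" where
  "gasp_S K L r = {K*L + j + K*t | j t. j \<le> r - 1}"

text \<open>alpha, 1-indexed: alpha_k = k-1 for 1 \<le> k \<le> K, and alpha_(K+i) is the
  i-th smallest element of gasp_S (i \<ge> 1).\<close>
definition gasp_alpha :: "nat \<Rightarrow> nat \<Rightarrow> nat \<Rightarrow> nat \<Rightarrow> nat \<Rightarrow> nat" where
  "gasp_alpha K L T r k =
     (if k \<le> K then k - 1 else enumerate (gasp_S K L r) (k - K - 1))"

definition gasp_beta :: "nat \<Rightarrow> nat \<Rightarrow> nat \<Rightarrow> nat \<Rightarrow> nat" where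
  "gasp_beta K L T c = (if c \<le> L then K * (c - 1) else K * L + (c - L - 1))"

definition gasp_P :: "nat \<Rightarrow> nat \<Rightarrow> nat \<Rightarrow> nat \<Rightarrow> nat \<Rightarrow> nat set" where
  "gasp_P K L T r i = {gasp_alpha K L T r k + gasp_beta K L T c | k c.
       1 \<le> k \<and> k \<le> K + i - 1 \<and> 1 \<le> c \<and> c \<le> L + T}"

definition gasp_Lset :: "nat \<Rightarrow> nat \<Rightarrow> nat \<Rightarrow> nat \<Rightarrow> nat \<Rightarrow> nat set" where
  "gasp_Lset K L T r i =
     ((\<lambda>b. gasp_alpha K L T r (K + i) + b) ` (gasp_beta K L T ` {1..L}))
     \<inter> gasp_P K L T r i"

definition gasp_Rset :: "nat \<Rightarrow> nat \<Rightarrow> nat \<Rightarrow> nat \<Rightarrow> nat \<Rightarrow> nat set" where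
  "gasp_Rset K L T r i =
     ((\<lambda>b. gasp_alpha K L T r (K + i) + b) ` (gasp_beta K L T ` {L+1..L+T}))
     \<inter> gasp_P K L T r i"

end

theory Submission
  imports Defs
begin

definition gf :: "nat \<Rightarrow> nat \<Rightarrow> nat \<Rightarrow> nat \<Rightarrow> nat" where
  "gf K L r n = K*L + n mod r + K*(n div r)"

lemma gf_Suc:
  assumes "1 \<le> r" "r \<le> K"
  shows "gf K L r (Suc n) = gf K L r n + (if Suc n mod r = 0 then K + 1 - r else 1)"
proof -
  have "n mod r < r" using assms by simp
  then show ?thesis using assms
    by (auto simp: gf_def div_Suc mod_Suc algebra_simps)
qed

lemma gf_strict_mono:
  assumes "1 \<le> r" "r \<le> K"
  shows "strict_mono (gf K L r)"
  unfolding strict_mono_Suc_iff using gf_Suc[OF assms] assms by simp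

lemma enum_range:
  assumes "strict_mono (f::nat \<Rightarrow> nat)"
  shows "enumerate (range f) n = f n"
proof (induction n)
  case 0
  show ?case unfolding enumerate_0
    by (rule Least_equality) (auto simp: strict_mono_less_eq[OF assms])
next
  case (Suc n)
  have inf: "infinite (range f)"
    using strict_mono_imp_inj_on[OF assms] finite_imageD by blast
  show ?case unfolding enumerate_Suc''[OF inf] Suc
    by (rule Least_equality) (auto simp: strict_mono_less[OF assms] strict_mono_less_eq[OF assms] Suc_le_eq)
qed

lemma S_eq:
  assumes "1 \<le> r"
  shows "gasp_S K L r = range (gf K L r)"
proof
  show "gasp_S K L r \<subseteq> range (gf K L r)"
  proof
    fix x assume "x \<in> gasp_S K L r"
    then obtain j t where x: "x = K*L + j + K*t" "j \<le> r - 1" unfolding gasp_S_def by blast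
    have "j < r" using x assms by linarith
    then have "gf K L r (t*r + j) = x" unfolding gf_def x by simp
    then show "x \<in> range (gf K L r)" by (metis rangeI)
  qed
next
  show "range (gf K L r) \<subseteq> gasp_S K L r"
  proof
    fix x assume "x \<in> range (gf K L r)"
    then obtain n where "x = gf K L r n" by blast
    moreover have "n mod r \<le> r - 1" using assms
      by (metis One_nat_def Suc_pred less_Suc_eq_le mod_less_divisor zero_less_one order_less_le_trans)
    ultimately show "x \<in> gasp_S K L r" unfolding gasp_S_def gf_def by blast
  qed
qed

lemma alpha_eq:
  assumes "1 \<le> r" "r \<le> K" "1 \<le> j"
  shows "gasp_alpha K L T r (K+j) = gf K L r (j-1)"
  using assms by (simp add: gasp_alpha_def S_eq enum_range gf_strict_mono)

lemma gf_ge: "K*L \<le> gf K L r n" by (simp add: gf_def)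

lemma P_mem:
  assumes K: "0 < K" and T: "0 < T" and r: "1 \<le> r" "r \<le> K" and i: "1 \<le> i"
  shows "x \<in> gasp_P K L T r i \<longleftrightarrow>
    (x + 2 \<le> K*L+K+T \<or> (\<exists>j. j+1 < i \<and> ((\<exists>c<L. x = gf K L r j + K*c)
        \<or> (\<exists>m<T. x = gf K L r j + K*L + m))))" (is "?l \<longleftrightarrow> ?r")
proof
  assume ?l
  then obtain k c where x: "x = gasp_alpha K L T r k + gasp_beta K L T c"
    and kc: "1 \<le> k" "k \<le> K + i - 1" "1 \<le> c" "c \<le> L + T"
    unfolding gasp_P_def by blast
  show ?r
  proof (cases "k \<le> K")
    case True
    then have xa: "x = k - 1 + gasp_beta K L T c" using x by (simp add: gasp_alpha_def)
    show ?thesis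
    proof (cases "c \<le> L")
      case True
      then have "K*(c-1) \<le> K*(L-1)" by (intro mult_le_mono2) simp
      also have "K*(L-1) = K*L - K" by (simp add: right_diff_distrib')
      finally have "x + 2 \<le> K*L+K+T" using xa True \<open>k \<le> K\<close> kc T K
        by (simp add: gasp_beta_def)
      then show ?thesis by blast
    next
      case False
      then have "x + 2 \<le> K*L+K+T" using xa kc \<open>k \<le> K\<close> by (simp add: gasp_beta_def)
      then show ?thesis by blast
    qed
  next
    case False
    define j where "j = k - K - 1"
    have kj: "k = K + (j+1)" using False j_def by simp
    have ax: "gasp_alpha K L T r k = gf K L r j" using alpha_eq[OF r, of "j+1"] kj by simp
    have j: "j + 1 < i" using kj kc by simp
    show ?thesis
    proof (cases "c \<le> L")
      case True
      then have "x = gf K L r j + K*(c-1)" "c - 1 < L" using x ax kc by (auto simp: gasp_beta_def)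
      then show ?thesis using j by blast
    next
      case False
      then have "x = gf K L r j + K*L + (c-L-1)" "c - L - 1 < T" using x ax kc by (auto simp: gasp_beta_def)
      then show ?thesis using j by blast
    qed
  qed
next
  assume ?r
  then consider "x + 2 \<le> K*L+K+T"
    | j c where "j+1 < i" "c < L" "x = gf K L r j + K*c"
    | j m where "j+1 < i" "m < T" "x = gf K L r j + K*L + m" by blast
  then show ?l
  proof cases
    case 1
    show ?thesis
    proof (cases "x < K*L")
      case True
      have "x div K < L" using True K by (simp add: div_less_iff_less_mult mult.commute)
      moreover have "x mod K < K" using K by simp
      moreover have "gasp_alpha K L T r (x mod K + 1) + gasp_beta K L T (x div K + 1) = x"
        using calculation by (simp add: gasp_alpha_def gasp_beta_def)
      ultimately show ?thesis unfolding gasp_P_def using i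
        by (intro CollectI exI[of _ "x mod K + 1"] exI[of _ "x div K + 1"]) auto
    next
      case False
      define d where "d = x - K*L"
      define k where "k = min d (K-1) + 1"
      define c where "c = L + 1 + (d - min d (K-1))"
      have kK: "k \<le> K" "\<not> c \<le> L" using K unfolding k_def c_def by auto
      have "gasp_alpha K L T r k + gasp_beta K L T c = k - 1 + (K*L + (c - L - 1))"
        using kK by (simp add: gasp_alpha_def gasp_beta_def)
      also have "\<dots> = x" using False K unfolding k_def c_def d_def by simp
      finally have "gasp_alpha K L T r k + gasp_beta K L T c = x" .
      moreover have "1 \<le> k" "k \<le> K + i - 1" "1 \<le> c" "c \<le> L + T"
        using 1 False K i T unfolding k_def c_def d_def by (auto simp: min_def)
      ultimately show ?thesis unfolding gasp_P_def by blast
    qed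
  next
    case 2
    have "gasp_alpha K L T r (K + (j+1)) + gasp_beta K L T (c + 1) = x"
      using 2 alpha_eq[OF r, of "j+1"] by (simp add: gasp_beta_def)
    then show ?thesis unfolding gasp_P_def using 2
      by (intro CollectI exI[of _ "K + (j+1)"] exI[of _ "c + 1"]) auto
  next
    case 3
    have "gasp_alpha K L T r (K + (j+1)) + gasp_beta K L T (L + 1 + m) = x"
      using 3 alpha_eq[OF r, of "j+1"] by (simp add: gasp_beta_def)
    then show ?thesis unfolding gasp_P_def using 3
      by (intro CollectI exI[of _ "K + (j+1)"] exI[of _ "L + 1 + m"]) auto
  qed
qed

lemma img_int_card:
  assumes "inj f"
  shows "card (f ` A \<inter> P) = card {a\<in>A. f a \<in> P}"
proof -
  have "f ` A \<inter> P = f ` {a\<in>A. f a \<in> P}" by blast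
  then show ?thesis using assms by (simp add: card_image inj_on_subset)
qed

lemma card_Lset:
  assumes K: "0 < K" and r: "1 \<le> r" "r \<le> K" and i: "1 \<le> i"
  shows "card (gasp_Lset K L T r i) = card {c. c < L \<and> gf K L r (i-1) + K*c \<in> gasp_P K L T r i}"
proof -
  have "(\<lambda>b. gasp_alpha K L T r (K + i) + b) ` (gasp_beta K L T ` {1..L})
      = (\<lambda>c. gf K L r (i-1) + K*c) ` {..<L}"
  proof -
    have "gasp_beta K L T ` {1..L} = (\<lambda>c. K*c) ` {..<L}"
    proof (rule set_eqI, rule iffI)
      fix y assume "y \<in> gasp_beta K L T ` {1..L}"
      then obtain c where "c \<in> {1..L}" "y = K*(c-1)" by (auto simp: gasp_beta_def)
      then show "y \<in> (\<lambda>c. K*c) ` {..<L}" by (intro image_eqI[of _ _ "c-1"]) auto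
    next
      fix y assume "y \<in> (\<lambda>c. K*c) ` {..<L}"
      then obtain c where "c < L" "y = K*c" by auto
      then show "y \<in> gasp_beta K L T ` {1..L}" by (intro image_eqI[of _ _ "c+1"]) (auto simp: gasp_beta_def)
    qed
    then show ?thesis using alpha_eq[OF r i] by (simp add: image_image)
  qed
  moreover have "inj (\<lambda>c. gf K L r (i-1) + K*c)" using K by (auto intro: injI)
  ultimately show ?thesis unfolding gasp_Lset_def by (simp add: img_int_card)
qed

lemma card_Rset:
  assumes r: "1 \<le> r" "r \<le> K" and i: "1 \<le> i"
  shows "card (gasp_Rset K L T r i) = card {m. m < T \<and> gf K L r (i-1) + K*L + m \<in> gasp_P K L T r i}"
proof -
  have "(\<lambda>b. gasp_alpha K L T r (K + i) + b) ` (gasp_beta K L T ` {L+1..L+T})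
      = (\<lambda>m. gf K L r (i-1) + K*L + m) ` {..<T}"
  proof -
    have "gasp_beta K L T ` {L+1..L+T} = (\<lambda>m. K*L + m) ` {..<T}"
    proof (rule set_eqI, rule iffI)
      fix y assume "y \<in> gasp_beta K L T ` {L+1..L+T}"
      then obtain c where "c \<in> {L+1..L+T}" "y = K*L + (c - L - 1)" by (auto simp: gasp_beta_def)
      then show "y \<in> (\<lambda>m. K*L + m) ` {..<T}" by (intro image_eqI[of _ _ "c-L-1"]) auto
    next
      fix y assume "y \<in> (\<lambda>m. K*L + m) ` {..<T}"
      then obtain m where "m < T" "y = K*L + m" by auto
      then show "y \<in> gasp_beta K L T ` {L+1..L+T}" by (intro image_eqI[of _ _ "L+1+m"]) (auto simp: gasp_beta_def)
    qed
    then show ?thesis using alpha_eq[OF r i] by (simp add: image_image add.assoc)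
  qed
  moreover have "inj (\<lambda>m. gf K L r (i-1) + K*L + m)" by (auto intro: injI)
  ultimately show ?thesis unfolding gasp_Rset_def by (simp add: img_int_card)
qed

lemma gf_small: "n < r \<Longrightarrow> gf K L r n = K*L + n" by (simp add: gf_def)

lemma gf_add_r:
  assumes "1 \<le> r" shows "gf K L r (n + r) = gf K L r n + K"
proof -
  have "(n+r) div r = Suc (n div r)" using assms by (simp add: div_add_self2)
  then show ?thesis by (simp add: gf_def)
qed

lemma L1:
  assumes K: "0 < K" and T: "0 < T" and r: "1 \<le> r" "r \<le> K" and i: "1 \<le> i" "i \<le> r" "i \<le> T"
  shows "card (gasp_Lset K L T r i) = min L ((K+T-1-i) div K + 1)"
proof -
  have a: "gf K L r (i-1) = K*L + (i-1)" using i by (simp add: gf_small)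
  have "{c. c < L \<and> gf K L r (i-1) + K*c \<in> gasp_P K L T r i} = {..< min L ((K+T-1-i) div K + 1)}"
  proof (rule set_eqI)
    fix c
    have "c < L \<and> K*L + (i-1) + K*c \<in> gasp_P K L T r i \<longleftrightarrow> c < L \<and> c \<le> (K+T-1-i) div K"
    proof (cases "c < L")
      case cL: True
      have no2: "\<not> (\<exists>j. j+1 < i \<and> ((\<exists>c'<L. K*L + (i-1) + K*c = gf K L r j + K*c')
             \<or> (\<exists>m<T. K*L + (i-1) + K*c = gf K L r j + K*L + m)))"
      proof
        assume "\<exists>j. j+1 < i \<and> ((\<exists>c'<L. K*L + (i-1) + K*c = gf K L r j + K*c')
             \<or> (\<exists>m<T. K*L + (i-1) + K*c = gf K L r j + K*L + m))"
        then obtain j where j: "j+1 < i" and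
          h: "(\<exists>c'<L. K*L + (i-1) + K*c = gf K L r j + K*c') \<or> (\<exists>m<T. K*L + (i-1) + K*c = gf K L r j + K*L + m)"
          by blast
        have gj: "gf K L r j = K*L + j" using j i by (simp add: gf_small)
        show False using h
        proof
          assume "\<exists>c'<L. K*L + (i-1) + K*c = gf K L r j + K*c'"
          then obtain c' where "(i-1) + K*c = j + K*c'" using gj by auto
          then have "(i-1 + K*c) mod K = (j + K*c') mod K" by simp
          moreover have "(i-1 + K*c) mod K = (i-1) mod K" by (simp only: mod_mult_self2)
          moreover have "(j + K*c') mod K = j mod K" by (simp only: mod_mult_self2)
          ultimately have "(i-1) mod K = j mod K" by simp
          then have "i - 1 = j" using i r j by simp
          then show False using j by simp
        next
          assume "\<exists>m<T. K*L + (i-1) + K*c = gf K L r j + K*L + m"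
          then obtain m where "(i-1) + K*c = j + K*L + m" using gj by auto
          then have "K*L < K*(c+1)" using i r by simp
          then have "L < c + 1" using mult_less_cancel1 by blast
          then show False using cL by simp
        qed
      qed
      have "K*L + (i-1) + K*c + 2 \<le> K*L+K+T \<longleftrightarrow> c*K \<le> K+T-1-i" using i K by (auto simp: mult.commute)
      also have "\<dots> \<longleftrightarrow> c \<le> (K+T-1-i) div K" using K by (simp add: less_eq_div_iff_mult_less_eq)
      finally show ?thesis using no2 cL P_mem[OF K T r i(1)] by blast
    qed simp
    then show "c \<in> {c. c < L \<and> gf K L r (i-1) + K*c \<in> gasp_P K L T r i} \<longleftrightarrow> c \<in> {..< min L ((K+T-1-i) div K + 1)}"
      using a by auto
  qed
  then show ?thesis using card_Lset[OF K r i(1)] by simp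
qed

lemma L2:
  assumes K: "0 < K" and T: "0 < T" and r: "1 \<le> r" "r \<le> K" and i: "r + 1 \<le> i"
  shows "card (gasp_Lset K L T r i) = L"
proof -
  have i1: "1 \<le> i" using i r by simp
  define j where "j = i - 1 - r"
  have a: "gf K L r (i-1) = gf K L r j + K" using gf_add_r[OF r(1), where n=j and K=K and L=L] i unfolding j_def by simp
  have j: "j + 1 < i" using i r unfolding j_def by simp
  have "{c. c < L \<and> gf K L r (i-1) + K*c \<in> gasp_P K L T r i} = {..<L}"
  proof (rule set_eqI)
    fix c
    show "c \<in> {c. c < L \<and> gf K L r (i-1) + K*c \<in> gasp_P K L T r i} \<longleftrightarrow> c \<in> {..<L}"
    proof (cases "c + 1 < L")
      case True
      have "gf K L r (i-1) + K*c = gf K L r j + K*(c+1)" using a by simp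
      moreover have "gf K L r j + K*(c+1) \<in> gasp_P K L T r i"
        unfolding P_mem[OF K T r i1] using True j by blast
      ultimately show ?thesis using True by (simp add: add.assoc)
    next
      case False
      show ?thesis
      proof (cases "c < L")
        case True
        then have "c + 1 = L" using False by simp
        then have "gf K L r (i-1) + K*c = gf K L r j + K*L + 0" using a by (metis add.assoc mult_Suc_right add_0_right Suc_eq_plus1 add.commute)
        moreover have "gf K L r j + K*L + 0 \<in> gasp_P K L T r i"
          unfolding P_mem[OF K T r i1] using T j by blast
        ultimately show ?thesis using True by simp
      qed simp
    qed
  qed
  then show ?thesis using card_Lset[OF K r i1] by simp
qed

lemma R1:
  assumes K: "0 < K" and T: "0 < T" and r: "1 \<le> r" "r \<le> K" and L: "1 \<le> L"
  shows "card (gasp_Rset K L T r 1) = K+T-(K*L+1)"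
proof -
  have a: "gf K L r 0 = K*L" by (simp add: gf_def)
  have "K \<le> K*L" using L by simp
  define p where "p = K*L - K"
  have KL: "K*L = K + p" using le_add_diff_inverse[OF \<open>K \<le> K*L\<close>] unfolding p_def by (rule sym)
  have "{m. m < T \<and> gf K L r (1-1) + K*L + m \<in> gasp_P K L T r 1} = {..< K+T-(K*L+1)}"
  proof (rule set_eqI)
    fix m
    have "gf K L r (1-1) + K*L + m \<in> gasp_P K L T r 1 \<longleftrightarrow> K*L + K*L + m + 2 \<le> K*L+K+T"
      unfolding P_mem[OF K T r order.refl] using a by simp
    moreover have "(m < T \<and> K*L + K*L + m + 2 \<le> K*L+K+T) \<longleftrightarrow> m < K+T-(K*L+1)"
      unfolding KL by linarith
    ultimately show "m \<in> {m. m < T \<and> gf K L r (1-1) + K*L + m \<in> gasp_P K L T r 1} \<longleftrightarrow> m \<in> {..< K+T-(K*L+1)}"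
      by simp
  qed
  then show ?thesis using card_Rset[OF r order.refl, where L=L and T=T] by simp
qed

lemma R2:
  assumes K: "0 < K" and T: "0 < T" and r: "1 \<le> r" "r \<le> K" and L: "1 \<le> L" and i: "2 \<le> i"
  shows "card (gasp_Rset K L T r i) = T - (if (i-1) mod r = 0 then K+1-r else 1)"
proof -
  define n where "n = i - 2"
  define d where "d = (if (i-1) mod r = 0 then K+1-r else 1)"
  have i1: "1 \<le> i" using i by simp
  have sn: "i - 1 = Suc n" using i unfolding n_def by simp
  have a: "gf K L r (i-1) = gf K L r n + d" unfolding sn gf_Suc[OF r] d_def using sn by simp
  have "K \<le> K*L" using L by simp
  define p where "p = K*L - K"
  have KL: "K*L = K + p" using le_add_diff_inverse[OF \<open>K \<le> K*L\<close>] unfolding p_def by (rule sym)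
  have mono: "\<And>a b. a \<le> b \<Longrightarrow> gf K L r a \<le> gf K L r b"
    using strict_mono_less_eq[OF gf_strict_mono[OF r]] by blast
  have dpos: "0 < d" using r unfolding d_def by simp
  have key: "gf K L r n + d + K*L + m \<in> gasp_P K L T r i \<longleftrightarrow> d + m < T" for m
  proof
    assume "gf K L r n + d + K*L + m \<in> gasp_P K L T r i"
    then consider "gf K L r n + d + K*L + m + 2 \<le> K*L+K+T"
      | j c where "j+1 < i" "c < L" "gf K L r n + d + K*L + m = gf K L r j + K*c"
      | j m' where "j+1 < i" "m' < T" "gf K L r n + d + K*L + m = gf K L r j + K*L + m'"
      unfolding P_mem[OF K T r i1] by blast
    then show "d + m < T"
    proof cases
      case 1
      then show ?thesis using gf_ge[of K L r n] KL by linarith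
    next
      case 2
      have "j \<le> n" using 2 unfolding n_def by simp
      then have "gf K L r j \<le> gf K L r n" by (rule mono)
      moreover have "K*c < K*L" using 2 K by simp
      ultimately show ?thesis using 2(3) dpos by linarith
    next
      case 3
      have "j \<le> n" using 3 unfolding n_def by simp
      then have "gf K L r j \<le> gf K L r n" by (rule mono)
      then show ?thesis using 3(2,3) by linarith
    qed
  next
    assume "d + m < T"
    moreover have "n + 1 < i" using i unfolding n_def by simp
    ultimately show "gf K L r n + d + K*L + m \<in> gasp_P K L T r i"
      unfolding P_mem[OF K T r i1] by (intro disjI2 exI[of _ n]) (auto intro!: exI[of _ "d+m"])
  qed
  have "{m. m < T \<and> gf K L r (i-1) + K*L + m \<in> gasp_P K L T r i} = {..< T - d}"
    unfolding a by (rule set_eqI, simp only: mem_Collect_eq lessThan_iff key, arith)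
  then have "card (gasp_Rset K L T r i) = T - d" using card_Rset[OF r i1, where L=L and T=T] by simp
  then show ?thesis unfolding d_def .
qed

lemma modeq:
  assumes "1 \<le> i" "1 \<le> (r::nat)"
  shows "i mod r = 1 mod r \<longleftrightarrow> (i-1) mod r = 0"
proof -
  obtain n where n: "i = Suc n" using assms by (cases i) auto
  have "n mod r < r" using assms by simp
  then show ?thesis unfolding n by (auto simp: mod_Suc)
qed

lemma int_diff_max: "int (a - b) = max 0 (int a - int b)"
  by (cases "b \<le> a") (auto simp: of_nat_diff max_def)

theorem lemma1:
  fixes K L T r i :: nat
  assumes "0 < K" and "0 < L" and "0 < T" and "L \<le> K"
    and "1 \<le> r" and "r \<le> min K T"
    and "1 \<le> i" and "i \<le> T"
  shows "(i \<le> r \<longrightarrow> int (card (gasp_Lset K L T r i))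
              = min (int L) (2 + (int T - 1 - int i) div int K))
       \<and> (r + 1 \<le> i \<longrightarrow> card (gasp_Lset K L T r i) = L)
       \<and> (i = 1 \<longrightarrow> int (card (gasp_Rset K L T r i))
              = max 0 (int K + int T - int K * int L - 1))
       \<and> (2 \<le> i \<and> i mod r = 1 mod r \<longrightarrow> int (card (gasp_Rset K L T r i))
              = max 0 (int T - int K + int r - 1))
       \<and> (\<not> i mod r = 1 mod r \<longrightarrow> card (gasp_Rset K L T r i) = T - 1)"
proof (intro conjI impI)
  have K: "0 < K" and T: "0 < T" and r: "1 \<le> r" "r \<le> K" and L: "1 \<le> L"
    using assms by auto
  {
    assume ir: "i \<le> r"
    have c: "card (gasp_Lset K L T r i) = min L ((K+T-1-i) div K + 1)"
      using L1[OF K T r assms(7) ir assms(8)] .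
    have "int ((K+T-1-i) div K) = int (K+T-1-i) div int K" by (simp add: zdiv_int)
    also have "int (K+T-1-i) = int K + (int T - 1 - int i)" using assms(8) K by (simp add: of_nat_diff)
    also have "(int K + (int T - 1 - int i)) div int K = (int T - 1 - int i) div int K + 1"
      using K by (simp add: div_add_self1)
    finally have "int ((K+T-1-i) div K + 1) = 2 + (int T - 1 - int i) div int K" by simp
    then show "int (card (gasp_Lset K L T r i)) = min (int L) (2 + (int T - 1 - int i) div int K)"
      unfolding c by (simp add: min_def)
  }
  {
    assume "r + 1 \<le> i"
    then show "card (gasp_Lset K L T r i) = L" using L2[OF K T r] by simp
  }
  {
    assume i1: "i = 1"
    show "int (card (gasp_Rset K L T r i)) = max 0 (int K + int T - int K * int L - 1)"
      unfolding i1 R1[OF K T r L] int_diff_max by simp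
  }
  {
    assume h: "2 \<le> i \<and> i mod r = 1 mod r"
    then have "(i-1) mod r = 0" using modeq[OF assms(7) r(1)] by simp
    then have "card (gasp_Rset K L T r i) = T - (K+1-r)" using R2[OF K T r L] h by simp
    then show "int (card (gasp_Rset K L T r i)) = max 0 (int T - int K + int r - 1)"
      using r by simp
  }
  {
    assume h: "\<not> i mod r = 1 mod r"
    then have "i \<noteq> 1" by auto
    then have i2: "2 \<le> i" using assms(7) by simp
    have "(i-1) mod r \<noteq> 0" using modeq[OF assms(7) r(1)] h by simp
    then show "card (gasp_Rset K L T r i) = T - 1" using R2[OF K T r L i2] by simp
  }
qed

end
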